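(* The following are equivalent for $(X,\tau,\mathcal{P})$: (1) $C(X)_\mathcal{P}$ is a clean ring; (2) $C^*(X)_\mathcal{P}$ is a clean ring; (3) the set of clean elements of $C(X)_\mathcal{P}$ is a subring of $C(X)_\mathcal{P}$; (4) $(X,\tau,\mathcal{P})$ is $\tau\mathcal{P}$-zero-dimensional; (5) every zero divisor of $C(X)_\mathcal{P}$ is clean; (6) $C(X)_\mathcal{P}$ has a clean prime ideal, i.e. a prime ideal all of whose elements are clean elements of $C(X)_\mathcal{P}$.
   Context: Let $(X,\tau)$ be a $T_1$ topological space and $\mathcal{P}$ an ideal of closed subsets of $X$ (a nonempty family of closed sets closed under finite unions and under taking closed subsets). For $f\colon X\to\mathbb{R}$, $D_f$ denotes the set of points of discontinuity of $f$, and $C(X)_\mathcal{P}=\{f\colon X\to\mathbb{R} : \overline{D_f}\in\mathcal{P}\}$, a commutative ring with unity under pointwise operations; $C^*(X)_\mathcal{P}$ is its subring of bounded functions. An element of a ring is clean if it is the sum of a unit and an idempotent; a ring is clean if all its elements are clean. For $f\in C(X)_\mathcal{P}$, $Z_\mathcal{P}(f)=\{x: f(x)=0\}$. A set $U\subseteq X$ is $\tau\mathcal{P}$-clopen if $U=Z_\mathcal{P}(f)=X\setminus Z_\mathcal{P}(g)$ for some $f,g\in C(X)_\mathcal{P}$. Sets $A,B\subseteq X$ are $\mathcal{P}$-completely separated if there is $f\in C(X)_\mathcal{P}$ with $f(A)\subseteq\{0\}$, $f(B)\subseteq\{1\}$. $(X,\tau,\mathcal{P})$ is $\tau\mathcal{P}$-zero-dimensional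 if for all $\mathcal{P}$-completely separated $A,B$ there is a $\tau\mathcal{P}$-clopen $U$ with $A\subseteq U\subseteq X\setminus B$. *)

theory Defs
  imports "HOL-Analysis.Analysis" "HOL-Library.Function_Algebras"
begin

(* The space X is the carrier (UNIV) of a type of class t1_space; tau is its topology. *)

definition closed_ideal :: "'a::topological_space set set \<Rightarrow> bool" where
  "closed_ideal P \<longleftrightarrow> P \<noteq> {} \<and> (\<forall>A\<in>P. closed A)
     \<and> (\<forall>A\<in>P. \<forall>B\<in>P. A \<union> B \<in> P)
     \<and> (\<forall>A\<in>P. \<forall>B. closed B \<and> B \<subseteq> A \<longrightarrow> B \<in> P)"

definition discont :: "('a::topological_space \<Rightarrow> real) \<Rightarrow> 'a set" where
  "discont f = {x. \<not> (f \<longlongrightarrow> f x) (at x)}"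

definition CP :: "'a::topological_space set set \<Rightarrow> ('a \<Rightarrow> real) set" where
  "CP P = {f. closure (discont f) \<in> P}"

definition CPstar :: "'a::topological_space set set \<Rightarrow> ('a \<Rightarrow> real) set" where
  "CPstar P = {f \<in> CP P. \<exists>M. \<forall>x. \<bar>f x\<bar> \<le> M}"

definition unit_in :: "'b::comm_ring_1 set \<Rightarrow> 'b \<Rightarrow> bool" where
  "unit_in R u \<longleftrightarrow> u \<in> R \<and> (\<exists>v\<in>R. u * v = 1)"

definition clean_in :: "'b::comm_ring_1 set \<Rightarrow> 'b \<Rightarrow> bool" where
  "clean_in R x \<longleftrightarrow> x \<in> R \<and> (\<exists>u e. unit_in R u \<and> e \<in> R \<and> e * e = e \<and> x = u + e)"

definition clean_ring :: "'b::comm_ring_1 set \<Rightarrow> bool" where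
  "clean_ring R \<longleftrightarrow> (\<forall>x\<in>R. clean_in R x)"

definition is_subring :: "'b::comm_ring_1 set \<Rightarrow> 'b set \<Rightarrow> bool" where
  "is_subring S R \<longleftrightarrow> S \<subseteq> R \<and> 0 \<in> S \<and> 1 \<in> S
     \<and> (\<forall>x\<in>S. \<forall>y\<in>S. x + y \<in> S \<and> x * y \<in> S) \<and> (\<forall>x\<in>S. - x \<in> S)"

definition zero_divisor_in :: "'b::comm_ring_1 set \<Rightarrow> 'b \<Rightarrow> bool" where
  "zero_divisor_in R x \<longleftrightarrow> x \<in> R \<and> (\<exists>y\<in>R. y \<noteq> 0 \<and> x * y = 0)"

definition prime_ideal_in :: "'b::comm_ring_1 set \<Rightarrow> 'b set \<Rightarrow> bool" where
  "prime_ideal_in R I \<longleftrightarrow> I \<subseteq> R \<and> 0 \<in> I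
     \<and> (\<forall>x\<in>I. \<forall>y\<in>I. x + y \<in> I) \<and> (\<forall>x\<in>I. - x \<in> I)
     \<and> (\<forall>r\<in>R. \<forall>x\<in>I. r * x \<in> I)
     \<and> I \<noteq> R
     \<and> (\<forall>x\<in>R. \<forall>y\<in>R. x * y \<in> I \<longrightarrow> x \<in> I \<or> y \<in> I)"

definition ZP :: "('a \<Rightarrow> real) \<Rightarrow> 'a set" where
  "ZP f = {x. f x = 0}"

definition tauP_clopen :: "'a::topological_space set set \<Rightarrow> 'a set \<Rightarrow> bool" where
  "tauP_clopen P U \<longleftrightarrow> (\<exists>f\<in>CP P. \<exists>g\<in>CP P. U = ZP f \<and> U = - ZP g)"

definition P_compl_sep :: "'a::topological_space set set \<Rightarrow> 'a set \<Rightarrow> 'a set \<Rightarrow> bool" where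
  "P_compl_sep P A B \<longleftrightarrow> (\<exists>f\<in>CP P. f ` A \<subseteq> {0} \<and> f ` B \<subseteq> {1})"

definition tauP_zero_dim :: "'a::topological_space set set \<Rightarrow> bool" where
  "tauP_zero_dim P \<longleftrightarrow> (\<forall>A B. P_compl_sep P A B \<longrightarrow>
      (\<exists>U. tauP_clopen P U \<and> A \<subseteq> U \<and> U \<subseteq> - B))"

end

theory Submission imports Defs begin

lemma CP_empty: "closed_ideal P \<Longrightarrow> {} \<in> P"
  unfolding closed_ideal_def by blast

lemma CP_const: "closed_ideal P \<Longrightarrow> (\<lambda>x. c) \<in> CP P"
  unfolding CP_def discont_def using CP_empty by auto

lemma CP_sub:
  assumes P: "closed_ideal P" and f: "f \<in> CP P" and g: "g \<in> CP P"
    and h: "discont h \<subseteq> discont f \<union> discont g"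
  shows "h \<in> CP P"
proof -
  have U: "\<forall>A\<in>P. \<forall>B\<in>P. A \<union> B \<in> P" and S: "\<forall>A\<in>P. \<forall>B. closed B \<and> B \<subseteq> A \<longrightarrow> B \<in> P"
    using P unfolding closed_ideal_def by blast+
  have "closure (discont f) \<in> P" "closure (discont g) \<in> P"
    using f g unfolding CP_def by auto
  hence A: "closure (discont f) \<union> closure (discont g) \<in> P" using U by blast
  have "closure (discont h) \<subseteq> closure (discont f \<union> discont g)"
    using h by (rule closure_mono)
  also have "\<dots> = closure (discont f) \<union> closure (discont g)" by (rule closure_Un)
  finally have "closure (discont h) \<in> P" using S A closed_closure by blast
  thus ?thesis unfolding CP_def by simp
qed

lemma discont_comp:
  assumes "continuous_on UNIV \<phi>"
  shows "discont (\<lambda>x. \<phi> (f x)) \<subseteq> discont f"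
proof
  fix x assume "x \<in> discont (\<lambda>x. \<phi> (f x))"
  moreover have "isCont \<phi> (f x)" using assms continuous_on_eq_continuous_at by blast
  ultimately show "x \<in> discont f" unfolding discont_def
    using isCont_tendsto_compose by blast
qed

lemma CP_comp: "closed_ideal P \<Longrightarrow> f \<in> CP P \<Longrightarrow> continuous_on UNIV \<phi> \<Longrightarrow> (\<lambda>x. \<phi> (f x)) \<in> CP P"
  using CP_sub[of P f f "\<lambda>x. \<phi> (f x)"] discont_comp[of \<phi> f] by simp

lemma CP_add: assumes "closed_ideal P" "f \<in> CP P" "g \<in> CP P" shows "f + g \<in> CP P"
proof -
  have "discont (f + g) \<subseteq> discont f \<union> discont g"
  proof
    fix x assume x: "x \<in> discont (f + g)"
    show "x \<in> discont f \<union> discont g"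
    proof (rule ccontr)
      assume "x \<notin> discont f \<union> discont g"
      hence "((\<lambda>y. f y + g y) \<longlongrightarrow> f x + g x) (at x)"
        unfolding discont_def by (auto intro: tendsto_add)
      thus False using x unfolding discont_def plus_fun_def by simp
    qed
  qed
  thus ?thesis using CP_sub assms by metis
qed

lemma CP_mult: assumes "closed_ideal P" "f \<in> CP P" "g \<in> CP P" shows "f * g \<in> CP P"
proof -
  have "discont (f * g) \<subseteq> discont f \<union> discont g"
  proof
    fix x assume x: "x \<in> discont (f * g)"
    show "x \<in> discont f \<union> discont g"
    proof (rule ccontr)
      assume "x \<notin> discont f \<union> discont g"
      hence "((\<lambda>y. f y * g y) \<longlongrightarrow> f x * g x) (at x)"
        unfolding discont_def by (auto intro: tendsto_mult)
      thus False using x unfolding discont_def times_fun_def by simp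
    qed
  qed
  thus ?thesis using CP_sub assms by metis
qed

lemma CP_uminus: assumes "closed_ideal P" "f \<in> CP P" shows "- f \<in> CP P"
proof -
  have "- f = (\<lambda>x. - (f x))" by auto
  thus ?thesis using CP_comp[OF assms, of uminus] by (simp add: continuous_on_minus continuous_on_id)
qed

lemma CP_inverse: assumes "closed_ideal P" "f \<in> CP P" "\<forall>x. f x \<noteq> 0"
  shows "(\<lambda>x. inverse (f x)) \<in> CP P"
proof -
  have "discont (\<lambda>x. inverse (f x)) \<subseteq> discont f \<union> discont f"
  proof
    fix x assume x: "x \<in> discont (\<lambda>x. inverse (f x))"
    show "x \<in> discont f \<union> discont f"
    proof (rule ccontr)
      assume "x \<notin> discont f \<union> discont f"
      hence "((\<lambda>y. inverse (f y)) \<longlongrightarrow> inverse (f x)) (at x)"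
        unfolding discont_def using assms(3) by (auto intro: tendsto_inverse)
      thus False using x unfolding discont_def by simp
    qed
  qed
  thus ?thesis using CP_sub assms by metis
qed

definition chi :: "'a set \<Rightarrow> 'a \<Rightarrow> real" where "chi V = (\<lambda>x. if x \<in> V then 1 else 0)"

lemma clopen_chi:
  assumes P: "closed_ideal P" and V: "tauP_clopen P V"
  shows "chi V \<in> CP P"
proof -
  obtain f g where f: "f \<in> CP P" and g: "g \<in> CP P" and Vf: "V = ZP f" and Vg: "V = - ZP g"
    using V unfolding tauP_clopen_def by blast
  have "discont (chi V) \<subseteq> discont f \<union> discont g"
  proof
    fix x assume x: "x \<in> discont (chi V)"
    show "x \<in> discont f \<union> discont g"
    proof (rule ccontr)
      assume "x \<notin> discont f \<union> discont g"
      hence tf: "(f \<longlongrightarrow> f x) (at x)" and tg: "(g \<longlongrightarrow> g x) (at x)"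
        unfolding discont_def by auto
      have "(chi V \<longlongrightarrow> chi V x) (at x)"
      proof (cases "x \<in> V")
        case True
        hence "g x \<noteq> 0" using Vg unfolding ZP_def by auto
        hence "eventually (\<lambda>y. g y \<noteq> 0) (at x)" using tendsto_imp_eventually_ne tg by blast
        hence "eventually (\<lambda>y. chi V y = chi V x) (at x)"
          by eventually_elim (use True Vg in \<open>auto simp: chi_def ZP_def\<close>)
        thus ?thesis by (rule tendsto_eventually)
      next
        case False
        hence "f x \<noteq> 0" using Vf unfolding ZP_def by auto
        hence "eventually (\<lambda>y. f y \<noteq> 0) (at x)" using tendsto_imp_eventually_ne tf by blast
        hence "eventually (\<lambda>y. chi V y = chi V x) (at x)"
          by eventually_elim (use False Vf in \<open>auto simp: chi_def ZP_def\<close>)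
        thus ?thesis by (rule tendsto_eventually)
      qed
      thus False using x unfolding discont_def by auto
    qed
  qed
  thus ?thesis using CP_sub[OF P f g] by blast
qed

lemma chi_clopen: assumes "chi V \<in> CP P" "closed_ideal P" shows "tauP_clopen P V"
proof -
  have "(\<lambda>x. 1 - chi V x) \<in> CP P"
    using CP_comp[OF assms(2) assms(1), of "\<lambda>t. 1 - t"] by (simp add: continuous_intros)
  moreover have "V = ZP (\<lambda>x. 1 - chi V x)" "V = - ZP (chi V)" by (auto simp: ZP_def chi_def)
  ultimately show ?thesis using assms(1) unfolding tauP_clopen_def by blast
qed

lemma unit_pw: fixes u :: "'a \<Rightarrow> real" assumes "unit_in S u" shows "u x \<noteq> 0"
proof -
  obtain v where uv: "u * v = 1" using assms unfolding unit_in_def by blast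
  have "u x * v x = 1" using fun_cong[OF uv, of x] by simp
  thus ?thesis by (metis mult_zero_left zero_neq_one)
qed

lemma idem_pw: fixes e :: "'a \<Rightarrow> real" assumes "e * e = e" shows "e x = 0 \<or> e x = 1"
proof -
  have "e x * e x = e x" using fun_cong[OF assms, of x] by simp
  hence "e x * (e x - 1) = 0" by (simp add: algebra_simps)
  thus ?thesis by simp
qed

lemma clean_sep:
  assumes S: "S \<subseteq> CP P" and P: "closed_ideal P" and c: "clean_in S g"
  shows "\<exists>V. tauP_clopen P V \<and> {x. g x = 0} \<subseteq> V \<and> V \<inter> {x. g x = 1} = {}"
proof -
  obtain u e where u: "unit_in S u" and e: "e \<in> S" and ee: "e * e = e" and g: "g = u + e"
    using c unfolding clean_in_def by blast
  define V where "V = {x. e x = 1}"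
  have "chi V = e" unfolding chi_def V_def fun_eq_iff using idem_pw[OF ee] by force
  hence "chi V \<in> CP P" using e S by auto
  hence "tauP_clopen P V" using chi_clopen P by blast
  moreover have "{x. g x = 0} \<subseteq> V"
  proof
    fix x assume "x \<in> {x. g x = 0}"
    hence "u x + e x = 0" using g by simp
    thus "x \<in> V" using unit_pw[OF u, of x] idem_pw[OF ee, of x] unfolding V_def by auto
  qed
  moreover have "V \<inter> {x. g x = 1} = {}"
    using unit_pw[OF u] g unfolding V_def by auto
  ultimately show ?thesis by blast
qed

lemma CP_diff: "closed_ideal P \<Longrightarrow> f \<in> CP P \<Longrightarrow> g \<in> CP P \<Longrightarrow> f - g \<in> CP P"
  by (metis CP_add CP_uminus diff_conv_add_uminus)

lemma clean_from_clopen: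
  assumes P: "closed_ideal P" and f: "f \<in> CP P" and V: "tauP_clopen P V"
    and A: "{x. f x \<le> 1/3} \<subseteq> V" and B: "V \<subseteq> {x. f x < 2/3}"
  shows "clean_in (CP P) f \<and> (f \<in> CPstar P \<longrightarrow> clean_in (CPstar P) f)"
proof -
  define e where "e = chi V"
  define u where "u = f - e"
  define v where "v = (\<lambda>x. inverse (u x))"
  have eCP: "e \<in> CP P" unfolding e_def using clopen_chi[OF P V] .
  have uCP: "u \<in> CP P" unfolding u_def using CP_diff[OF P f eCP] .
  have ub: "\<bar>u x\<bar> \<ge> 1/3" for x
  proof (cases "x \<in> V")
    case True
    then show ?thesis using B unfolding u_def e_def chi_def by auto
  next
    case False
    then show ?thesis using A unfolding u_def e_def chi_def by force
  qed
  hence un: "\<forall>x. u x \<noteq> 0" by (metis abs_zero divide_pos_pos not_le zero_less_numeral zero_less_one)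
  have vCP: "v \<in> CP P" unfolding v_def using CP_inverse[OF P uCP un] .
  have uv: "u * v = 1" unfolding v_def fun_eq_iff using un by simp
  have ee: "e * e = e" unfolding e_def chi_def fun_eq_iff by simp
  have fue: "f = u + e" unfolding u_def by simp
  have c1: "clean_in (CP P) f"
    unfolding clean_in_def unit_in_def using f uCP vCP uv eCP ee fue by blast
  moreover have "clean_in (CPstar P) f" if fs: "f \<in> CPstar P"
  proof -
    obtain M where M: "\<forall>x. \<bar>f x\<bar> \<le> M" using fs unfolding CPstar_def by blast
    have "\<bar>u x\<bar> \<le> M + 1" for x using M[rule_format, of x] unfolding u_def e_def chi_def by auto
    hence us: "u \<in> CPstar P" using uCP unfolding CPstar_def by blast
    have "\<bar>v x\<bar> \<le> 3" for x
    proof -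
      have "\<bar>v x\<bar> = inverse \<bar>u x\<bar>" unfolding v_def by simp
      also have "\<dots> \<le> inverse (1/3)" using ub[of x] by (intro le_imp_inverse_le) auto
      finally show ?thesis by simp
    qed
    hence vs: "v \<in> CPstar P" using vCP unfolding CPstar_def by blast
    have "\<bar>e x\<bar> \<le> 1" for x unfolding e_def chi_def by auto
    hence es: "e \<in> CPstar P" using eCP unfolding CPstar_def by blast
    show ?thesis unfolding clean_in_def unit_in_def using fs us vs uv es ee fue by blast
  qed
  ultimately show ?thesis by blast
qed

definition alpha :: "real \<Rightarrow> real" where "alpha t = min 1 (max 0 (2 - 4*t))"
definition beta :: "real \<Rightarrow> real" where "beta t = min 1 (max 0 (4*t - 2))"

lemma alpha_cont: "continuous_on UNIV alpha" unfolding alpha_def by (intro continuous_intros)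
lemma beta_cont: "continuous_on UNIV beta" unfolding beta_def by (intro continuous_intros)
lemma alpha_beta: "alpha t * beta t = 0" unfolding alpha_def beta_def by auto

lemma ab_sep:
  assumes S: "S \<subseteq> CP P" and P: "closed_ideal P"
    and fA: "f ` A \<subseteq> {0}" and fB: "f ` B \<subseteq> {1}"
    and c: "clean_in S (\<lambda>x. alpha (f x)) \<or> clean_in S (\<lambda>x. beta (f x))"
  shows "\<exists>U. tauP_clopen P U \<and> A \<subseteq> U \<and> U \<subseteq> - B"
  using c
proof
  assume "clean_in S (\<lambda>x. alpha (f x))"
  then obtain V where V: "tauP_clopen P V" and z: "{x. alpha (f x) = 0} \<subseteq> V"
    and o: "V \<inter> {x. alpha (f x) = 1} = {}"
    using clean_sep[OF S P] by blast
  have "tauP_clopen P (- V)" using V unfolding tauP_clopen_def by auto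
  moreover have "A \<subseteq> - V"
  proof
    fix x assume "x \<in> A" hence "f x = 0" using fA by auto
    hence "alpha (f x) = 1" unfolding alpha_def by simp
    thus "x \<in> - V" using o by auto
  qed
  moreover have "B \<subseteq> V"
  proof
    fix x assume "x \<in> B" hence "f x = 1" using fB by auto
    hence "alpha (f x) = 0" unfolding alpha_def by simp
    thus "x \<in> V" using z by auto
  qed
  hence "- V \<subseteq> - B" by blast
  ultimately show ?thesis by blast
next
  assume "clean_in S (\<lambda>x. beta (f x))"
  then obtain V where V: "tauP_clopen P V" and z: "{x. beta (f x) = 0} \<subseteq> V"
    and o: "V \<inter> {x. beta (f x) = 1} = {}"
    using clean_sep[OF S P] by blast
  moreover have "A \<subseteq> V"
  proof
    fix x assume "x \<in> A" hence "f x = 0" using fA by auto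
    hence "beta (f x) = 0" unfolding beta_def by simp
    thus "x \<in> V" using z by auto
  qed
  moreover have "V \<inter> B = {}"
  proof -
    have "x \<notin> V" if "x \<in> B" for x
    proof -
      have "f x = 1" using fB that by auto
      hence "beta (f x) = 1" unfolding beta_def by simp
      thus "x \<notin> V" using o by auto
    qed
    thus ?thesis by blast
  qed
  hence "V \<subseteq> - B" by blast
  ultimately show ?thesis by blast
qed

lemma zd_clopen:
  assumes P: "closed_ideal P" and zd: "tauP_zero_dim P" and f: "f \<in> CP P"
  shows "\<exists>V. tauP_clopen P V \<and> {x. f x \<le> 1/3} \<subseteq> V \<and> V \<subseteq> {x. f x < 2/3}"
proof -
  define h where "h = (\<lambda>x. min 1 (max 0 (3 * f x - 1)))"
  have "h \<in> CP P" unfolding h_def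
    using CP_comp[OF P f, of "\<lambda>t. min 1 (max 0 (3 * t - 1))"] by (simp add: continuous_intros)
  moreover have "h ` {x. f x \<le> 1/3} \<subseteq> {0}" unfolding h_def by auto
  moreover have "h ` {x. f x \<ge> 2/3} \<subseteq> {1}" unfolding h_def by auto
  ultimately have "P_compl_sep P {x. f x \<le> 1/3} {x. f x \<ge> 2/3}"
    unfolding P_compl_sep_def by blast
  then obtain U where "tauP_clopen P U" "{x. f x \<le> 1/3} \<subseteq> U" "U \<subseteq> - {x. f x \<ge> 2/3}"
    using zd unfolding tauP_zero_dim_def by blast
  thus ?thesis by force
qed

lemma CP_one: "closed_ideal P \<Longrightarrow> 1 \<in> CP P"
  using CP_const[of P 1] by (simp add: one_fun_def)

lemma CP_zero: "closed_ideal P \<Longrightarrow> 0 \<in> CP P"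
  using CP_const[of P 0] by (simp add: zero_fun_def)

lemma unit_clean:
  assumes P: "closed_ideal P" and u: "u \<in> CP P" and nz: "\<forall>x. u x \<noteq> 0"
  shows "clean_in (CP P) u"
proof -
  have v: "(\<lambda>x. inverse (u x)) \<in> CP P" using CP_inverse[OF P u nz] .
  have "u * (\<lambda>x. inverse (u x)) = 1" using nz by (simp add: fun_eq_iff)
  hence "unit_in (CP P) u" unfolding unit_in_def using u v by blast
  moreover have "u = u + 0" by simp
  ultimately show ?thesis unfolding clean_in_def using u CP_zero[OF P] by force
qed

lemma zero_clean: assumes P: "closed_ideal P" shows "clean_in (CP P) 0"
proof -
  have m: "- 1 \<in> CP P" using CP_uminus[OF P CP_one[OF P]] .
  have "unit_in (CP P) (- 1)" unfolding unit_in_def using m by (intro conjI bexI[of _ "- 1"]) auto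
  moreover have "(0::'a \<Rightarrow> real) = - 1 + 1" by simp
  ultimately show ?thesis unfolding clean_in_def using CP_one[OF P] CP_zero[OF P] by force
qed

lemma CP_alpha: "closed_ideal P \<Longrightarrow> f \<in> CP P \<Longrightarrow> (\<lambda>x. alpha (f x)) \<in> CP P"
  using CP_comp alpha_cont by blast
lemma CP_beta: "closed_ideal P \<Longrightarrow> f \<in> CP P \<Longrightarrow> (\<lambda>x. beta (f x)) \<in> CP P"
  using CP_comp beta_cont by blast

lemma CPstar_sub: "CPstar P \<subseteq> CP P" unfolding CPstar_def by auto

theorem theorem3p7:
  fixes P :: "'a::t1_space set set"
  assumes "closed_ideal P"
  shows "(clean_ring (CP P) \<longleftrightarrow> clean_ring (CPstar P))
    \<and> (clean_ring (CP P) \<longleftrightarrow> is_subring {f. clean_in (CP P) f} (CP P))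
    \<and> (clean_ring (CP P) \<longleftrightarrow> tauP_zero_dim P)
    \<and> (clean_ring (CP P) \<longleftrightarrow> (\<forall>f. zero_divisor_in (CP P) f \<longrightarrow> clean_in (CP P) f))
    \<and> (clean_ring (CP P) \<longleftrightarrow> (\<exists>I. prime_ideal_in (CP P) I \<and> (\<forall>f\<in>I. clean_in (CP P) f)))"
proof -
  note P = assms
  have i14: "tauP_zero_dim P" if c: "clean_ring (CP P)"
    unfolding tauP_zero_dim_def P_compl_sep_def
  proof (intro allI impI)
    fix A B assume "\<exists>f\<in>CP P. f ` A \<subseteq> {0} \<and> f ` B \<subseteq> {1}"
    then obtain f where f: "f \<in> CP P" "f ` A \<subseteq> {0}" "f ` B \<subseteq> {1}" by blast
    have "clean_in (CP P) (\<lambda>x. beta (f x))" using c CP_beta[OF P f(1)] unfolding clean_ring_def by blast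
    thus "\<exists>U. tauP_clopen P U \<and> A \<subseteq> U \<and> U \<subseteq> - B" using ab_sep[OF _ P f(2,3)] by blast
  qed
  have i41: "clean_ring (CP P)" if zd: "tauP_zero_dim P"
    unfolding clean_ring_def
  proof
    fix f assume f: "f \<in> CP P"
    obtain V where "tauP_clopen P V" "{x. f x \<le> 1/3} \<subseteq> V" "V \<subseteq> {x. f x < 2/3}"
      using zd_clopen[OF P zd f] by blast
    thus "clean_in (CP P) f" using clean_from_clopen[OF P f] by blast
  qed
  have i42: "clean_ring (CPstar P)" if zd: "tauP_zero_dim P"
    unfolding clean_ring_def
  proof
    fix f assume fs: "f \<in> CPstar P"
    hence f: "f \<in> CP P" unfolding CPstar_def by auto
    obtain V where "tauP_clopen P V" "{x. f x \<le> 1/3} \<subseteq> V" "V \<subseteq> {x. f x < 2/3}"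
      using zd_clopen[OF P zd f] by blast
    thus "clean_in (CPstar P) f" using clean_from_clopen[OF P f] fs by blast
  qed
  have i24: "tauP_zero_dim P" if c: "clean_ring (CPstar P)"
    unfolding tauP_zero_dim_def P_compl_sep_def
  proof (intro allI impI)
    fix A B assume "\<exists>f\<in>CP P. f ` A \<subseteq> {0} \<and> f ` B \<subseteq> {1}"
    then obtain f where f: "f \<in> CP P" "f ` A \<subseteq> {0}" "f ` B \<subseteq> {1}" by blast
    have "\<bar>beta (f x)\<bar> \<le> 1" for x unfolding beta_def by auto
    hence "(\<lambda>x. beta (f x)) \<in> CPstar P" using CP_beta[OF P f(1)] unfolding CPstar_def by blast
    hence "clean_in (CPstar P) (\<lambda>x. beta (f x))" using c unfolding clean_ring_def by blast
    thus "\<exists>U. tauP_clopen P U \<and> A \<subseteq> U \<and> U \<subseteq> - B" using ab_sep[OF CPstar_sub P f(2,3)] by blast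
  qed
  have i13: "is_subring {f. clean_in (CP P) f} (CP P)" if c: "clean_ring (CP P)"
  proof -
    have "{f. clean_in (CP P) f} = CP P" using c unfolding clean_ring_def clean_in_def by blast
    thus ?thesis unfolding is_subring_def
      using CP_zero[OF P] CP_one[OF P] CP_add[OF P] CP_mult[OF P] CP_uminus[OF P] by auto
  qed
  have i31: "clean_ring (CP P)" if s: "is_subring {f. clean_in (CP P) f} (CP P)"
    unfolding clean_ring_def
  proof
    fix f assume f: "f \<in> CP P"
    define u1 where "u1 = (\<lambda>x. max (f x) 0 + 1)"
    define u2 where "u2 = (\<lambda>x. min (f x) 0 - 1)"
    have "u1 \<in> CP P" unfolding u1_def
      using CP_comp[OF P f, of "\<lambda>t. max t 0 + 1"] by (simp add: continuous_intros)
    moreover have "\<forall>x. u1 x \<noteq> 0" unfolding u1_def by (auto simp: max_def)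
    ultimately have c1: "clean_in (CP P) u1" using unit_clean[OF P] by blast
    have "u2 \<in> CP P" unfolding u2_def
      using CP_comp[OF P f, of "\<lambda>t. min t 0 - 1"] by (simp add: continuous_intros)
    moreover have "\<forall>x. u2 x \<noteq> 0" unfolding u2_def by (auto simp: min_def)
    ultimately have c2: "clean_in (CP P) u2" using unit_clean[OF P] by blast
    have "f = u1 + u2" unfolding u1_def u2_def fun_eq_iff by (simp add: max_def min_def)
    thus "clean_in (CP P) f" using s c1 c2 unfolding is_subring_def by auto
  qed
  have i54: "tauP_zero_dim P" if c: "\<forall>f. zero_divisor_in (CP P) f \<longrightarrow> clean_in (CP P) f"
    unfolding tauP_zero_dim_def P_compl_sep_def
  proof (intro allI impI)
    fix A B assume "\<exists>f\<in>CP P. f ` A \<subseteq> {0} \<and> f ` B \<subseteq> {1}"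
    then obtain f where f: "f \<in> CP P" "f ` A \<subseteq> {0}" "f ` B \<subseteq> {1}" by blast
    have a: "(\<lambda>x. alpha (f x)) \<in> CP P" and b: "(\<lambda>x. beta (f x)) \<in> CP P"
      using CP_alpha[OF P f(1)] CP_beta[OF P f(1)] by auto
    have ab: "(\<lambda>x. alpha (f x)) * (\<lambda>x. beta (f x)) = 0" by (simp add: fun_eq_iff alpha_beta)
    have "clean_in (CP P) (\<lambda>x. alpha (f x)) \<or> clean_in (CP P) (\<lambda>x. beta (f x))"
    proof (cases "(\<lambda>x. beta (f x)) = 0")
      case True thus ?thesis using zero_clean[OF P] by simp
    next
      case False
      hence "zero_divisor_in (CP P) (\<lambda>x. alpha (f x))"
        unfolding zero_divisor_in_def using a b ab by blast
      thus ?thesis using c by blast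
    qed
    thus "\<exists>U. tauP_clopen P U \<and> A \<subseteq> U \<and> U \<subseteq> - B" using ab_sep[OF _ P f(2,3)] by blast
  qed
  have i64: "tauP_zero_dim P" if ex: "\<exists>I. prime_ideal_in (CP P) I \<and> (\<forall>f\<in>I. clean_in (CP P) f)"
    unfolding tauP_zero_dim_def P_compl_sep_def
  proof (intro allI impI)
    obtain I where I: "prime_ideal_in (CP P) I" and cI: "\<forall>f\<in>I. clean_in (CP P) f" using ex by blast
    fix A B assume "\<exists>f\<in>CP P. f ` A \<subseteq> {0} \<and> f ` B \<subseteq> {1}"
    then obtain f where f: "f \<in> CP P" "f ` A \<subseteq> {0}" "f ` B \<subseteq> {1}" by blast
    have a: "(\<lambda>x. alpha (f x)) \<in> CP P" and b: "(\<lambda>x. beta (f x)) \<in> CP P"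
      using CP_alpha[OF P f(1)] CP_beta[OF P f(1)] by auto
    have "(\<lambda>x. alpha (f x)) * (\<lambda>x. beta (f x)) = 0" by (simp add: fun_eq_iff alpha_beta)
    hence ab: "(\<lambda>x. alpha (f x)) * (\<lambda>x. beta (f x)) \<in> I"
      using I unfolding prime_ideal_in_def by simp
    hence "(\<lambda>x. alpha (f x)) \<in> I \<or> (\<lambda>x. beta (f x)) \<in> I"
      using I a b unfolding prime_ideal_in_def by blast
    hence "clean_in (CP P) (\<lambda>x. alpha (f x)) \<or> clean_in (CP P) (\<lambda>x. beta (f x))"
      using cI by blast
    thus "\<exists>U. tauP_clopen P U \<and> A \<subseteq> U \<and> U \<subseteq> - B" using ab_sep[OF _ P f(2,3)] by blast
  qed
  have i16: "\<exists>I. prime_ideal_in (CP P) I \<and> (\<forall>f\<in>I. clean_in (CP P) f)" if c: "clean_ring (CP P)"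
  proof -
    define x0 :: 'a where "x0 = undefined"
    define I where "I = {f \<in> CP P. f x0 = 0}"
    have "1 \<notin> I" unfolding I_def by simp
    hence "I \<noteq> CP P" using CP_one[OF P] by blast
    hence "prime_ideal_in (CP P) I" unfolding prime_ideal_in_def I_def
      using CP_zero[OF P] CP_add[OF P] CP_mult[OF P] CP_uminus[OF P] by auto
    moreover have "\<forall>f\<in>I. clean_in (CP P) f" using c unfolding clean_ring_def I_def by blast
    ultimately show ?thesis by blast
  qed
  have i15: "\<forall>f. zero_divisor_in (CP P) f \<longrightarrow> clean_in (CP P) f" if c: "clean_ring (CP P)"
    using c unfolding clean_ring_def zero_divisor_in_def by blast
  show ?thesis using i14 i41 i42 i24 i13 i31 i54 i64 i16 i15 by blast
qed

end
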